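(* Let $R$ be a commutative ring with identity, $\mathcal S$ an associative $R$-algebra with identity, $\mathcal M$ a $2$-torsion free bimodule over $\mathcal S$, $\delta$ a derivation on $\mathcal S$ and $f:\mathcal S\to\mathcal M$ a bimodule homomorphism over $\mathcal S$. If $D:\mathcal S\to\mathcal M$ is a Jordan $(\delta,f)$-derivation on $\mathcal M$, then $(D(xy)-D(x)y-f(x)\delta(y))(xy-yx)=0$ for all $x,y\in\mathcal S$.
   Context: A derivation on $\mathcal S$ is an additive map $\delta$ with $\delta(ab)=\delta(a)b+a\delta(b)$. An additive map $D:\mathcal S\to\mathcal M$ is a Jordan $(\delta,f)$-derivation if $D(x^2)=D(x)x+f(x)\delta(x)$ for all $x\in\mathcal S$. $\mathcal M$ is $2$-torsion free if $2m=0$ implies $m=0$. *)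

theory Defs
  imports Main
begin

text \<open>An associative unital R-algebra: the ring structure of S comes from the type class
  ring_1 (associative, unital, not necessarily commutative); sc is the R-scalar action.\<close>
definition algebra_over ::
  "('r::comm_ring_1 \<Rightarrow> 'a::ring_1 \<Rightarrow> 'a) \<Rightarrow> bool" where
  "algebra_over sc \<longleftrightarrow>
     (\<forall>r a b. sc r (a + b) = sc r a + sc r b) \<and>
     (\<forall>r s a. sc (r + s) a = sc r a + sc s a) \<and>
     (\<forall>r s a. sc (r * s) a = sc r (sc s a)) \<and>
     (\<forall>a. sc 1 a = a) \<and>
     (\<forall>r a b. sc r (a * b) = sc r a * b) \<and>
     (\<forall>r a b. sc r (a * b) = a * sc r b)"

definition bimodule ::
  "('a::ring_1 \<Rightarrow> 'm::ab_group_add \<Rightarrow> 'm) \<Rightarrow> ('m \<Rightarrow> 'a \<Rightarrow> 'm) \<Rightarrow> bool" where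
  "bimodule lm rm \<longleftrightarrow>
     (\<forall>a m n. lm a (m + n) = lm a m + lm a n) \<and>
     (\<forall>a b m. lm (a + b) m = lm a m + lm b m) \<and>
     (\<forall>a b m. lm (a * b) m = lm a (lm b m)) \<and>
     (\<forall>m. lm 1 m = m) \<and>
     (\<forall>a m n. rm (m + n) a = rm m a + rm n a) \<and>
     (\<forall>a b m. rm m (a + b) = rm m a + rm m b) \<and>
     (\<forall>a b m. rm m (a * b) = rm (rm m a) b) \<and>
     (\<forall>m. rm m 1 = m) \<and>
     (\<forall>a b m. rm (lm a m) b = lm a (rm m b))"

definition two_torsion_free :: "'m::ab_group_add itself \<Rightarrow> bool" where
  "two_torsion_free _ \<longleftrightarrow> (\<forall>m::'m. m + m = 0 \<longrightarrow> m = 0)"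

definition additive :: "('a::plus \<Rightarrow> 'b::plus) \<Rightarrow> bool" where
  "additive g \<longleftrightarrow> (\<forall>x y. g (x + y) = g x + g y)"

definition derivation :: "('a::ring_1 \<Rightarrow> 'a) \<Rightarrow> bool" where
  "derivation d \<longleftrightarrow> additive d \<and> (\<forall>a b. d (a * b) = d a * b + a * d b)"

definition bimodule_hom ::
  "('a::ring_1 \<Rightarrow> 'm::ab_group_add \<Rightarrow> 'm) \<Rightarrow> ('m \<Rightarrow> 'a \<Rightarrow> 'm) \<Rightarrow> ('a \<Rightarrow> 'm) \<Rightarrow> bool" where
  "bimodule_hom lm rm f \<longleftrightarrow> additive f \<and>
     (\<forall>a x. f (a * x) = lm a (f x)) \<and> (\<forall>a x. f (x * a) = rm (f x) a)"

definition jordan_delta_f_derivation ::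
  "('m::ab_group_add \<Rightarrow> 'a::ring_1 \<Rightarrow> 'm) \<Rightarrow> ('a \<Rightarrow> 'm) \<Rightarrow> ('a \<Rightarrow> 'a) \<Rightarrow> ('a \<Rightarrow> 'm) \<Rightarrow> bool" where
  "jordan_delta_f_derivation rm D d f \<longleftrightarrow> additive D \<and>
     (\<forall>x. D (x * x) = rm (D x) x + rm (f x) (d x))"

end

theory Submission
  imports Defs
begin

lemma additive_facts:
  fixes g :: "'a::ab_group_add \<Rightarrow> 'b::ab_group_add"
  assumes "additive g"
  shows "g (a + b) = g a + g b" "g 0 = 0" "g (- a) = - g a" "g (a - b) = g a - g b"
proof -
  have A: "g (x + y) = g x + g y" for x y using assms unfolding additive_def by blast
  show "g (a + b) = g a + g b" by (rule A)
  have "g (0 + 0) = g 0 + g 0" by (rule A)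
  then show 2: "g 0 = 0" by simp
  have N: "g (- x) = - g x" for x
  proof -
    have "g (- x + x) = g (- x) + g x" by (rule A)
    then have "g (- x) + g x = 0" using 2 by simp
    then show ?thesis by (simp add: eq_neg_iff_add_eq_0)
  qed
  then show "g (- a) = - g a" .
  have "g (a + - b) = g a + g (- b)" by (rule A)
  then show "g (a - b) = g a - g b" using N by simp
qed

theorem lemma3p7:
  fixes sc :: "'r::comm_ring_1 \<Rightarrow> 'a::ring_1 \<Rightarrow> 'a"
    and lm :: "'a \<Rightarrow> 'm::ab_group_add \<Rightarrow> 'm"
    and rm :: "'m \<Rightarrow> 'a \<Rightarrow> 'm"
    and d :: "'a \<Rightarrow> 'a"
    and f D :: "'a \<Rightarrow> 'm"
  assumes "algebra_over sc"
    and "bimodule lm rm"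
    and "two_torsion_free TYPE('m)"
    and "derivation d"
    and "bimodule_hom lm rm f"
    and "jordan_delta_f_derivation rm D d f"
  shows "\<forall>x y. rm (D (x * y) - rm (D x) y - rm (f x) (d y)) (x * y - y * x) = 0"
proof -
  have rA: "rm (m + n) a = rm m a + rm n a" for m n a using assms(2) by (simp add: bimodule_def)
  have rB: "rm m (a + b) = rm m a + rm m b" for m a b using assms(2) by (simp add: bimodule_def)
  have rC: "rm (rm m a) b = rm m (a * b)" for m a b using assms(2) by (simp add: bimodule_def)
  have adA: "additive (\<lambda>m. rm m a)" for a by (simp add: additive_def rA)
  have adB: "additive (\<lambda>a. rm m a)" for m by (simp add: additive_def rB)
  note rAf = additive_facts[OF adA] and rBf = additive_facts[OF adB]
  have adD: "additive D" using assms(6) by (simp add: jordan_delta_f_derivation_def)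
  have adf: "additive f" using assms(5) by (simp add: bimodule_hom_def)
  have add: "additive d" using assms(4) by (simp add: derivation_def)
  note Df = additive_facts[OF adD] and ff = additive_facts[OF adf] and df = additive_facts[OF add]
  have dm: "d (a * b) = d a * b + a * d b" for a b using assms(4) by (simp add: derivation_def)
  have fm: "f (a * b) = rm (f a) b" for a b using assms(5) unfolding bimodule_hom_def by blast
  have J: "D (a * a) = rm (D a) a + rm (f a) (d a)" for a using assms(6) by (simp add: jordan_delta_f_derivation_def)
  note S = rAf rBf rC Df ff df dm fm distrib_left distrib_right mult.assoc
  have L1: "D (a * b + b * a) = rm (D a) b + rm (D b) a + rm (f a) (d b) + rm (f b) (d a)" for a b
  proof -
    have "D ((a + b) * (a + b)) = rm (D (a+b)) (a+b) + rm (f (a+b)) (d (a+b))" by (rule J)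
    then have "D (a*a) + D (a * b + b * a) + D (b*b) = rm (D a) a + rm (D a) b + rm (D b) a + rm (D b) b
       + rm (f a) (d a) + rm (f a) (d b) + rm (f b) (d a) + rm (f b) (d b)"
      by (simp add: S algebra_simps)
    then show ?thesis by (simp add: J algebra_simps)
  qed
  have L2: "D (a * b * a) = rm (D a) (b * a) + rm (f a) (d b * a) + rm (f a) (b * d a)" for a b
  proof -
    have e: "a * (a * b + b * a) + (a * b + b * a) * a - ((a*a) * b + b * (a*a)) = a*b*a + a*b*a"
      by (simp add: algebra_simps)
    have "D (a*b*a) + D (a*b*a) = D (a*b*a + a*b*a)" by (simp only: Df(1))
    also have "\<dots> = D (a * (a * b + b * a) + (a * b + b * a) * a - ((a*a) * b + b * (a*a)))"
      unfolding e ..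
    also have "\<dots> = D (a * (a * b + b * a) + (a * b + b * a) * a) - D ((a*a) * b + b * (a*a))"
      by (rule Df(4))
    also have "\<dots> = (rm (D a) (a * b + b * a) + rm (rm (D a) b + rm (D b) a + rm (f a) (d b) + rm (f b) (d a)) a
         + rm (f a) (d (a * b + b * a)) + rm (f (a * b + b * a)) (d a))
       - (rm (rm (D a) a + rm (f a) (d a)) b + rm (D b) (a*a) + rm (f (a*a)) (d b) + rm (f b) (d (a*a)))"
      unfolding L1 L1[of a b] L1[of "a*a" b] J ..
    also have "\<dots> = (rm (D a) (b * a) + rm (f a) (d b * a) + rm (f a) (b * d a)) +
                     (rm (D a) (b * a) + rm (f a) (d b * a) + rm (f a) (b * d a))"
      by (simp add: S algebra_simps)
    finally have "(D (a*b*a) - (rm (D a) (b * a) + rm (f a) (d b * a) + rm (f a) (b * d a))) +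
       (D (a*b*a) - (rm (D a) (b * a) + rm (f a) (d b * a) + rm (f a) (b * d a))) = 0"
      by (simp add: algebra_simps)
    then have "D (a*b*a) - (rm (D a) (b * a) + rm (f a) (d b * a) + rm (f a) (b * d a)) = 0"
      using assms(3) unfolding two_torsion_free_def by blast
    then show ?thesis by simp
  qed
  show ?thesis
  proof (intro allI)
    fix x y
    have yx: "D (y * x) = rm (D x) y + rm (D y) x + rm (f x) (d y) + rm (f y) (d x) - D (x * y)"
      using L1[of x y] Df(1)[of "x*y" "y*x"] by (simp add: algebra_simps)
    have w1: "D (x*y*(x*y)) + D (y*x*(y*x)) = rm (D (x*y)) (x*y) + rm (f (x*y)) (d (x*y))
        + rm (D (y*x)) (y*x) + rm (f (y*x)) (d (y*x))" using J by simp
    have w2: "D (x*y*(x*y)) + D (y*x*(y*x)) = D (x * (y*x*y) + (y*x*y) * x)"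
      by (simp add: Df mult.assoc)
    have "rm (D (x*y)) (x*y) + rm (f (x*y)) (d (x*y))
        + rm (D (y*x)) (y*x) + rm (f (y*x)) (d (y*x)) = 
        rm (D x) (y*x*y) + rm (D (y*x*y)) x + rm (f x) (d (y*x*y)) + rm (f (y*x*y)) (d x)"
      using w1 w2 L1 by simp
    then have "rm (D (x*y)) (x*y) + rm (f x) (y * d (x*y))
        + rm (rm (D x) y + rm (D y) x + rm (f x) (d y) + rm (f y) (d x) - D (x * y)) (y*x) + rm (f y) (x * d (y*x)) = 
        rm (D x) (y*x*y) + rm (D y) (x * y * x) + rm (f y) (d (x * y) * x) + rm (f y) (x * y * d x)
        + rm (f x) (d (y*x*y))"
      unfolding yx L2 by (simp add: S)
    then show "rm (D (x * y) - rm (D x) y - rm (f x) (d y)) (x * y - y * x) = 0"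
      by (simp add: S algebra_simps)
  qed
qed

end
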